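(* Let $\gamma=(\gamma_1,\gamma_2)\ge(0,0)$, $\varkappa\ge0$, and $\tilde\gamma\in\mathbb R^2$ with $-\gamma\le\tilde\gamma\le\gamma$. If $A\in\mathcal M_{\gamma,\varkappa}$ and $\zeta\in Y_{\tilde\gamma}$, then $A\zeta$, defined by $(A\zeta)_a=\sum_{b\in\mathcal L}A_a^b\zeta_b$, is well defined (the series converge), $A\zeta\in Y_{\tilde\gamma}$, and $$\|A\zeta\|_{\tilde\gamma}\le|A|_{\gamma,\varkappa}\,\|\zeta\|_{\tilde\gamma}.$$
   Context: Let $d_*\ge1$ and $\mathcal L\subset\mathbb Z^{d_*}$. For $a\in\mathbb Z^{d_*}$, $\langle a\rangle=\max(|a|,1)$ and $[a-b]=\min(|a-b|,|a+b|)$; pairs in $\mathbb R^2$ are ordered componentwise. For $\gamma=(\gamma_1,\gamma_2)\in\mathbb R^2$, $Y_\gamma$ is the space of sequences $\zeta=(\zeta_a)_{a\in\mathcal L}\in(\mathbb C^2)^{\mathcal L}$ with $\|\zeta\|_\gamma^2=\sum_{a\in\mathcal L}|\zeta_a|^2e^{2\gamma_1|a|}\langle a\rangle^{2\gamma_2}<\infty$ ($|\cdot|$ the Hermitian norm on $\mathbb C^2$). For $\varkappa\ge0$ let $e_{\gamma,\varkappa}(a,b)=C\,e^{\gamma_1[a-b]}\max([a-b],1)^{\gamma_2}\min(\langle a\rangle,\langle b\rangle)^{\varkappa}$, where $C\ge1$ is a fixed constant taken sufficiently large depending only on $\gamma_2,\varkappa$ (standing assumption). For a matrix $A=(A_a^b)_{a,b\in\mathcal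 L}$ of complex $2\times 2$ blocks, $|A|_{\gamma,\varkappa}=\max\{\sup_a\sum_b\|A_a^b\|e_{\gamma,\varkappa}(a,b),\ \sup_b\sum_a\|A_a^b\|e_{\gamma,\varkappa}(a,b)\}$ (operator norms of the blocks), and $\mathcal M_{\gamma,\varkappa}$ is the space of such matrices with finite norm. *)

theory Defs
  imports "HOL-Analysis.Analysis"
begin

text \<open>Points of \<open>\<int>^d\<close> are represented as functions \<open>nat \<Rightarrow> int\<close>
  vanishing at indices \<open>\<ge> d\<close>; elements of \<open>\<complex>^2\<close> as \<open>complex^2\<close>
  (whose norm is the Hermitian norm); \<open>2\<times>2\<close> blocks as \<open>complex^2^2\<close>.\<close>

type_synonym lpt = "nat \<Rightarrow> int"

definition lat :: "nat \<Rightarrow> lpt set" where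
  "lat d = {a. \<forall>i\<ge>d. a i = 0}"

definition lnorm :: "nat \<Rightarrow> lpt \<Rightarrow> real" where
  "lnorm d a = sqrt (\<Sum>i<d. (real_of_int (a i))^2)"

definition jbr :: "nat \<Rightarrow> lpt \<Rightarrow> real" where
  "jbr d a = max (lnorm d a) 1"

definition bdist :: "nat \<Rightarrow> lpt \<Rightarrow> lpt \<Rightarrow> real" where
  "bdist d a b = min (lnorm d (\<lambda>i. a i - b i)) (lnorm d (\<lambda>i. a i + b i))"

definition wt :: "nat \<Rightarrow> real \<Rightarrow> real \<Rightarrow> lpt \<Rightarrow> real" where
  "wt d g1 g2 a = exp (g1 * lnorm d a) * (jbr d a) powr g2"

definition inY :: "nat \<Rightarrow> lpt set \<Rightarrow> real \<Rightarrow> real \<Rightarrow> (lpt \<Rightarrow> complex^2) \<Rightarrow> bool" where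
  "inY d L g1 g2 \<zeta> \<longleftrightarrow> (\<lambda>a. (norm (\<zeta> a))^2 * (wt d g1 g2 a)^2) summable_on L"

definition Ynorm :: "nat \<Rightarrow> lpt set \<Rightarrow> real \<Rightarrow> real \<Rightarrow> (lpt \<Rightarrow> complex^2) \<Rightarrow> real" where
  "Ynorm d L g1 g2 \<zeta> = sqrt (\<Sum>\<^sub>\<infinity>a\<in>L. (norm (\<zeta> a))^2 * (wt d g1 g2 a)^2)"

definition ew :: "real \<Rightarrow> nat \<Rightarrow> real \<Rightarrow> real \<Rightarrow> real \<Rightarrow> lpt \<Rightarrow> lpt \<Rightarrow> real" where
  "ew C d g1 g2 k a b = C * exp (g1 * bdist d a b) * (max (bdist d a b) 1) powr g2
      * (min (jbr d a) (jbr d b)) powr k"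

definition bnorm :: "complex^2^2 \<Rightarrow> real" where
  "bnorm M = onorm (\<lambda>x. M *v x)"

type_synonym bmat = "lpt \<Rightarrow> lpt \<Rightarrow> complex^2^2"

text \<open>\<open>A\<close> is indexed as \<open>A a b = A_a^b\<close>.\<close>
definition rowsum :: "real \<Rightarrow> nat \<Rightarrow> lpt set \<Rightarrow> real \<Rightarrow> real \<Rightarrow> real \<Rightarrow> bmat \<Rightarrow> lpt \<Rightarrow> real" where
  "rowsum C d L g1 g2 k A a = (\<Sum>\<^sub>\<infinity>b\<in>L. bnorm (A a b) * ew C d g1 g2 k a b)"

definition colsum :: "real \<Rightarrow> nat \<Rightarrow> lpt set \<Rightarrow> real \<Rightarrow> real \<Rightarrow> real \<Rightarrow> bmat \<Rightarrow> lpt \<Rightarrow> real" where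
  "colsum C d L g1 g2 k A b = (\<Sum>\<^sub>\<infinity>a\<in>L. bnorm (A a b) * ew C d g1 g2 k a b)"

definition inM :: "real \<Rightarrow> nat \<Rightarrow> lpt set \<Rightarrow> real \<Rightarrow> real \<Rightarrow> real \<Rightarrow> bmat \<Rightarrow> bool" where
  "inM C d L g1 g2 k A \<longleftrightarrow>
     (\<forall>a\<in>L. (\<lambda>b. bnorm (A a b) * ew C d g1 g2 k a b) summable_on L) \<and>
     (\<forall>b\<in>L. (\<lambda>a. bnorm (A a b) * ew C d g1 g2 k a b) summable_on L) \<and>
     bdd_above (rowsum C d L g1 g2 k A ` L) \<and> bdd_above (colsum C d L g1 g2 k A ` L)"

definition Mnorm :: "real \<Rightarrow> nat \<Rightarrow> lpt set \<Rightarrow> real \<Rightarrow> real \<Rightarrow> real \<Rightarrow> bmat \<Rightarrow> real" where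
  "Mnorm C d L g1 g2 k A =
     max (SUP a\<in>L. rowsum C d L g1 g2 k A a) (SUP b\<in>L. colsum C d L g1 g2 k A b)"

definition mapply :: "lpt set \<Rightarrow> bmat \<Rightarrow> (lpt \<Rightarrow> complex^2) \<Rightarrow> lpt \<Rightarrow> complex^2" where
  "mapply L A \<zeta> a = (\<Sum>\<^sub>\<infinity>b\<in>L. A a b *v \<zeta> b)"

end

theory Submission
  imports Defs
begin

lemma lnorm_L2: "lnorm d a = L2_set (\<lambda>i. real_of_int (a i)) {..<d}"
  by (simp add: lnorm_def L2_set_def)

lemma lnorm_nonneg: "0 \<le> lnorm d a"
  by (simp add: lnorm_def sum_nonneg)

lemma lnorm_tri: "lnorm d (\<lambda>i. x i + y i) \<le> lnorm d x + lnorm d y"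
  unfolding lnorm_L2 using L2_set_triangle_ineq[of "\<lambda>i. real_of_int (x i)" "\<lambda>i. real_of_int (y i)" "{..<d}"]
  by simp

lemma lnorm_neg: "lnorm d (\<lambda>i. - x i) = lnorm d x"
  by (simp add: lnorm_def)

lemma lnorm_le_bdist: "lnorm d a \<le> lnorm d b + bdist d a b"
proof -
  have 1: "lnorm d a \<le> lnorm d b + lnorm d (\<lambda>i. a i - b i)"
    using lnorm_tri[of d b "\<lambda>i. a i - b i"] by simp
  have "lnorm d a \<le> lnorm d (\<lambda>i. - b i) + lnorm d (\<lambda>i. a i + b i)"
    using lnorm_tri[of d "\<lambda>i. - b i" "\<lambda>i. a i + b i"] by simp
  hence 2: "lnorm d a \<le> lnorm d b + lnorm d (\<lambda>i. a i + b i)" by (simp add: lnorm_neg)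
  show ?thesis using 1 2 unfolding bdist_def by linarith
qed

lemma bdist_sym: "bdist d a b = bdist d b a"
proof -
  have "lnorm d (\<lambda>i. a i - b i) = lnorm d (\<lambda>i. b i - a i)"
    using lnorm_neg[of d "\<lambda>i. b i - a i"] by simp
  moreover have "lnorm d (\<lambda>i. a i + b i) = lnorm d (\<lambda>i. b i + a i)" by (simp add: add.commute)
  ultimately show ?thesis by (simp add: bdist_def)
qed

lemma bdist_nonneg: "0 \<le> bdist d a b"
  by (simp add: bdist_def lnorm_nonneg)

lemma exp_part:
  assumes "-g1 \<le> t1" "t1 \<le> g1"
  shows "t1 * lnorm d a \<le> t1 * lnorm d b + g1 * bdist d a b"
proof (cases "t1 \<ge> 0")
  case True
  have "t1 * lnorm d a \<le> t1 * (lnorm d b + bdist d a b)"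
    using lnorm_le_bdist True by (simp add: mult_left_mono)
  also have "\<dots> \<le> t1 * lnorm d b + g1 * bdist d a b"
    using assms bdist_nonneg[of d a b] by (simp add: algebra_simps mult_right_mono)
  finally show ?thesis .
next
  case False
  have "lnorm d b \<le> lnorm d a + bdist d a b"
    using lnorm_le_bdist[of d b a] bdist_sym by simp
  hence "t1 * lnorm d a \<le> t1 * lnorm d b - t1 * bdist d a b"
    using False mult_left_mono_neg[of "lnorm d b" "lnorm d a + bdist d a b" t1] by (simp add: algebra_simps)
  also have "\<dots> \<le> t1 * lnorm d b + g1 * bdist d a b"
  proof -
    have "0 \<le> (g1 + t1) * bdist d a b" using assms bdist_nonneg[of d a b] by simp
    thus ?thesis by (simp add: algebra_simps)
  qed
  finally show ?thesis .
qed

lemma jbr_ge1: "1 \<le> jbr d a" by (simp add: jbr_def)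

lemma jbr_le: "jbr d a \<le> 2 * max (bdist d a b) 1 * jbr d b"
proof -
  define m where "m = max (bdist d a b) 1"
  have m1: "1 \<le> m" by (simp add: m_def)
  have "jbr d a \<le> jbr d b + m"
    using lnorm_le_bdist[of d a b] bdist_nonneg[of d a b] lnorm_nonneg[of d b]
    unfolding jbr_def m_def by linarith
  also have "\<dots> \<le> jbr d b * m + jbr d b * m"
  proof -
    have "jbr d b \<le> jbr d b * m" using m1 jbr_ge1[of d b] by (simp add: mult_le_cancel_left1)
    moreover have "m \<le> jbr d b * m" using m1 jbr_ge1[of d b] by (simp add: mult_le_cancel_right1)
    ultimately show ?thesis by linarith
  qed
  finally show ?thesis by (simp add: m_def algebra_simps)
qed

lemma powr_part:
  assumes "-g2 \<le> t2" "t2 \<le> g2"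
  shows "jbr d a powr t2 \<le> (2 * max (bdist d a b) 1) powr g2 * jbr d b powr t2"
proof -
  define m where "m = 2 * max (bdist d a b) 1"
  have m1: "1 \<le> m" by (simp add: m_def)
  have pa: "0 < jbr d a" "0 < jbr d b" using jbr_ge1[of d a] jbr_ge1[of d b] by auto
  show ?thesis
  proof (cases "t2 \<ge> 0")
    case True
    have "jbr d a powr t2 \<le> (m * jbr d b) powr t2"
      using jbr_le[of d a b] True pa by (simp add: m_def powr_mono2)
    also have "\<dots> = m powr t2 * jbr d b powr t2" using m1 pa by (simp add: powr_mult)
    also have "\<dots> \<le> m powr g2 * jbr d b powr t2"
      using m1 assms by (simp add: powr_mono mult_right_mono)
    finally show ?thesis by (simp add: m_def)
  next
    case False
    have "jbr d b powr (-t2) \<le> (m * jbr d a) powr (-t2)"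
      using jbr_le[of d b a] bdist_sym[of d a b] False pa by (simp add: m_def powr_mono2)
    also have "\<dots> = m powr (-t2) * jbr d a powr (-t2)" using m1 pa by (simp add: powr_mult)
    finally have "jbr d b powr (-t2) \<le> m powr (-t2) * jbr d a powr (-t2)" .
    hence "jbr d a powr t2 \<le> m powr (-t2) * jbr d b powr t2"
      using pa m1 by (simp add: powr_minus divide_simps mult.commute)
    also have "\<dots> \<le> m powr g2 * jbr d b powr t2"
      using m1 assms by (simp add: powr_mono mult_right_mono)
    finally show ?thesis by (simp add: m_def)
  qed
qed

lemma wt_pos: "0 < wt d t1 t2 a"
  using jbr_ge1[of d a] by (simp add: wt_def)

lemma wt_le:
  assumes "-g1 \<le> t1" "t1 \<le> g1" "-g2 \<le> t2" "t2 \<le> g2" "0 \<le> g2" "0 \<le> k"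
    and C: "2 powr g2 \<le> C"
  shows "wt d t1 t2 a \<le> ew C d g1 g2 k a b * wt d t1 t2 b"
proof -
  define m where "m = max (bdist d a b) 1"
  have m1: "1 \<le> m" by (simp add: m_def)
  have e: "exp (t1 * lnorm d a) \<le> exp (g1 * bdist d a b) * exp (t1 * lnorm d b)"
    using exp_part[OF assms(1,2), of d a b] by (simp add: exp_add[symmetric] add.commute)
  have p: "jbr d a powr t2 \<le> 2 powr g2 * m powr g2 * jbr d b powr t2"
    using powr_part[OF assms(3,4), of d a b] m1 by (simp add: m_def powr_mult)
  have mn: "1 \<le> min (jbr d a) (jbr d b) powr k"
    using jbr_ge1 assms(6) by (simp add: ge_one_powr_ge_zero)
  have "wt d t1 t2 a \<le> (exp (g1 * bdist d a b) * exp (t1 * lnorm d b)) * (2 powr g2 * m powr g2 * jbr d b powr t2)"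
    unfolding wt_def by (rule mult_mono[OF e p]) auto
  also have "\<dots> = 2 powr g2 * exp (g1 * bdist d a b) * m powr g2 * wt d t1 t2 b"
    by (simp add: wt_def)
  also have "\<dots> \<le> C * exp (g1 * bdist d a b) * m powr g2 * min (jbr d a) (jbr d b) powr k * wt d t1 t2 b"
  proof -
    have "2 powr g2 \<le> C * min (jbr d a) (jbr d b) powr k"
    proof -
      have "0 < C" using C by (smt (verit) powr_gt_zero)
      hence "C \<le> C * min (jbr d a) (jbr d b) powr k" using mn by (simp add: mult_le_cancel_left1)
      thus ?thesis using C by linarith
    qed
    moreover have "0 \<le> exp (g1 * bdist d a b) * m powr g2 * wt d t1 t2 b"
      using wt_pos[of d t1 t2 b] by simp
    ultimately have "2 powr g2 * (exp (g1 * bdist d a b) * m powr g2 * wt d t1 t2 b)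
       \<le> (C * min (jbr d a) (jbr d b) powr k) * (exp (g1 * bdist d a b) * m powr g2 * wt d t1 t2 b)"
      by (rule mult_right_mono)
    thus ?thesis by (simp only: mult_ac)
  qed
  finally show ?thesis by (simp add: ew_def m_def)
qed

lemma infsum_finsum:
  fixes f :: "'i \<Rightarrow> 'a \<Rightarrow> real"
  assumes "finite F" "\<And>i. i \<in> F \<Longrightarrow> f i summable_on A"
  shows "(\<lambda>x. \<Sum>i\<in>F. f i x) summable_on A \<and> infsum (\<lambda>x. \<Sum>i\<in>F. f i x) A = (\<Sum>i\<in>F. infsum (f i) A)"
  using assms
proof (induction F rule: finite_induct)
  case empty thus ?case by simp
next
  case (insert j F)
  hence IH: "(\<lambda>x. \<Sum>i\<in>F. f i x) summable_on A"
    "infsum (\<lambda>x. \<Sum>i\<in>F. f i x) A = (\<Sum>i\<in>F. infsum (f i) A)" by auto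
  have fj: "f j summable_on A" using insert by auto
  have e: "(\<lambda>x. \<Sum>i\<in>insert j F. f i x) = (\<lambda>x. f j x + (\<Sum>i\<in>F. f i x))"
    using insert(1,2) by simp
  show ?case unfolding e
  proof
    show "(\<lambda>x. f j x + (\<Sum>i\<in>F. f i x)) summable_on A" by (rule summable_on_add[OF fj IH(1)])
    show "infsum (\<lambda>x. f j x + (\<Sum>i\<in>F. f i x)) A = (\<Sum>i\<in>insert j F. infsum (f i) A)"
      using infsum_add[OF fj IH(1)] IH(2) insert(1,2) by simp
  qed
qed

lemma schur:
  fixes K :: "'a \<Rightarrow> 'a \<Rightarrow> real" and x :: "'a \<Rightarrow> real"
  assumes Kn: "\<And>a b. a \<in> L \<Longrightarrow> b \<in> L \<Longrightarrow> 0 \<le> K a b"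
  and rs1: "\<And>a. a \<in> L \<Longrightarrow> K a summable_on L"
  and rs2: "\<And>a. a \<in> L \<Longrightarrow> infsum (K a) L \<le> M"
  and cs1: "\<And>b. b \<in> L \<Longrightarrow> (\<lambda>a. K a b) summable_on L"
  and cs2: "\<And>b. b \<in> L \<Longrightarrow> infsum (\<lambda>a. K a b) L \<le> M"
  and xn: "\<And>b. b \<in> L \<Longrightarrow> 0 \<le> x b" and xs: "(\<lambda>b. (x b)^2) summable_on L"
  and M0: "0 \<le> M"
  shows "\<forall>a\<in>L. (\<lambda>b. K a b * x b) summable_on L"
    and "(\<lambda>a. (infsum (\<lambda>b. K a b * x b) L)^2) summable_on L"
    and "infsum (\<lambda>a. (infsum (\<lambda>b. K a b * x b) L)^2) L \<le> M^2 * infsum (\<lambda>b. (x b)^2) L"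
proof -
  have KM: "K a b \<le> M" if "a \<in> L" "b \<in> L" for a b
  proof -
    have "sum (K a) {b} \<le> infsum (K a) L"
      by (rule finite_sum_le_infsum) (use that rs1 Kn in auto)
    thus ?thesis using rs2[OF that(1)] by simp
  qed
  have s2: "(\<lambda>b. K a b * (x b)^2) summable_on L" if a: "a \<in> L" for a
  proof (rule summable_on_comparison_test[OF summable_on_cmult_right[OF xs, of M]])
    fix b assume "b \<in> L"
    thus "K a b * (x b)^2 \<le> M * (x b)^2" using KM a by (simp add: mult_right_mono)
    show "0 \<le> K a b * (x b)^2" using Kn a \<open>b \<in> L\<close> by simp
  qed
  show s1: "\<forall>a\<in>L. (\<lambda>b. K a b * x b) summable_on L"
  proof
    fix a assume a: "a \<in> L"
    show "(\<lambda>b. K a b * x b) summable_on L"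
    proof (rule summable_on_comparison_test[OF summable_on_add[OF rs1[OF a] s2[OF a]]])
      fix b assume b: "b \<in> L"
      have "0 \<le> (x b - 1)^2" by simp
      hence "x b \<le> 1 + (x b)^2" using xn[OF b] by (simp add: power2_eq_square algebra_simps)
      hence "K a b * x b \<le> K a b * (1 + (x b)^2)" using Kn[OF a b] by (simp add: mult_left_mono)
      thus "K a b * x b \<le> K a b + K a b * (x b)^2" by (simp add: algebra_simps)
      show "0 \<le> K a b * x b" using Kn[OF a b] xn[OF b] by simp
    qed
  qed
  define t where "t a = infsum (\<lambda>b. K a b * (x b)^2) L" for a
  define s where "s a = infsum (\<lambda>b. K a b * x b) L" for a
  define X where "X = infsum (\<lambda>b. (x b)^2) L"
  have sle: "(s a)^2 \<le> M * t a" if a: "a \<in> L" for a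
  proof -
    have "s a \<le> sqrt (M * t a)"
      unfolding s_def
    proof (rule infsum_le_finite_sums)
      show "(\<lambda>b. K a b * x b) summable_on L" using s1 a by auto
      fix F assume F: "finite F" "F \<subseteq> L"
      have "(\<Sum>b\<in>F. K a b * x b)^2 = (\<Sum>b\<in>F. sqrt (K a b) * (sqrt (K a b) * x b))^2"
        using Kn a F by (intro arg_cong[where f="\<lambda>u. u^2"] sum.cong) (auto simp: mult.assoc[symmetric])
      also have "\<dots> \<le> (\<Sum>b\<in>F. (sqrt (K a b))^2) * (\<Sum>b\<in>F. (sqrt (K a b) * x b)^2)"
        by (rule Cauchy_Schwarz_ineq_sum)
      also have "\<dots> = (\<Sum>b\<in>F. K a b) * (\<Sum>b\<in>F. K a b * (x b)^2)"
        using Kn a F by (intro arg_cong2[where f="(*)"] sum.cong) (auto simp: power_mult_distrib)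
      also have "\<dots> \<le> M * t a"
      proof (rule mult_mono)
        have "(\<Sum>b\<in>F. K a b) \<le> infsum (K a) L"
          by (rule finite_sum_le_infsum) (use F rs1 Kn a in auto)
        thus "(\<Sum>b\<in>F. K a b) \<le> M" using rs2[OF a] by simp
        show "(\<Sum>b\<in>F. K a b * (x b)^2) \<le> t a" unfolding t_def
          by (rule finite_sum_le_infsum) (use F s2 Kn a in auto)
        show "0 \<le> M" by fact
        show "0 \<le> (\<Sum>b\<in>F. K a b * (x b)^2)" using F Kn a by (auto intro!: sum_nonneg)
      qed
      finally show "(\<Sum>b\<in>F. K a b * x b) \<le> sqrt (M * t a)"
        using real_le_rsqrt by blast
    qed
    moreover have "0 \<le> s a" unfolding s_def using Kn xn a by (auto intro!: infsum_nonneg)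
    moreover have "0 \<le> M * t a" unfolding t_def using M0 Kn a by (auto intro!: mult_nonneg_nonneg infsum_nonneg)
    ultimately show ?thesis
      by (metis power_mono real_sqrt_pow2)
  qed
  have tF: "sum t F \<le> M * X" if F: "finite F" "F \<subseteq> L" for F
  proof -
    have fs: "(\<lambda>b. \<Sum>a\<in>F. K a b * (x b)^2) summable_on L \<and>
      infsum (\<lambda>b. \<Sum>a\<in>F. K a b * (x b)^2) L = (\<Sum>a\<in>F. infsum (\<lambda>b. K a b * (x b)^2) L)"
      by (rule infsum_finsum) (use F s2 in auto)
    have "sum t F = infsum (\<lambda>b. \<Sum>a\<in>F. K a b * (x b)^2) L"
      using fs by (simp add: t_def)
    also have "\<dots> \<le> infsum (\<lambda>b. M * (x b)^2) L"
    proof (rule infsum_mono)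
      show "(\<lambda>b. \<Sum>a\<in>F. K a b * (x b)^2) summable_on L"
        using fs by simp
      show "(\<lambda>b. M * (x b)^2) summable_on L" by (rule summable_on_cmult_right[OF xs])
      fix b assume b: "b \<in> L"
      have "(\<Sum>a\<in>F. K a b) \<le> infsum (\<lambda>a. K a b) L"
        by (rule finite_sum_le_infsum) (use F cs1 Kn b in auto)
      hence "(\<Sum>a\<in>F. K a b) \<le> M" using cs2[OF b] by simp
      hence "(\<Sum>a\<in>F. K a b) * (x b)^2 \<le> M * (x b)^2" by (simp add: mult_right_mono)
      thus "(\<Sum>a\<in>F. K a b * (x b)^2) \<le> M * (x b)^2" by (simp add: sum_distrib_right)
    qed
    also have "\<dots> = M * X" unfolding X_def by (rule infsum_cmult_right) (simp add: xs)
    finally show ?thesis .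
  qed
  have tn: "0 \<le> t a" if "a \<in> L" for a unfolding t_def using Kn that by (auto intro!: infsum_nonneg)
  have ts: "t summable_on L"
    by (rule nonneg_bdd_above_summable_on) (use tn tF in \<open>auto intro!: bdd_aboveI\<close>)
  have tI: "infsum t L \<le> M * X" by (rule infsum_le_finite_sums[OF ts tF])
  show ss: "(\<lambda>a. (infsum (\<lambda>b. K a b * x b) L)^2) summable_on L"
    by (rule summable_on_comparison_test[OF summable_on_cmult_right[OF ts, of M]])
       (use sle in \<open>auto simp: s_def\<close>)
  have "infsum (\<lambda>a. (s a)^2) L \<le> infsum (\<lambda>a. M * t a) L"
    by (rule infsum_mono) (use ss summable_on_cmult_right[OF ts, of M] sle in \<open>auto simp: s_def\<close>)
  also have "\<dots> = M * infsum t L" by (rule infsum_cmult_right) (simp add: ts)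
  also have "\<dots> \<le> M * (M * X)" using tI M0 by (simp add: mult_left_mono)
  finally show "infsum (\<lambda>a. (infsum (\<lambda>b. K a b * x b) L)^2) L \<le> M^2 * infsum (\<lambda>b. (x b)^2) L"
    by (simp add: s_def X_def power2_eq_square mult.assoc)
qed

lemma bnorm_nonneg: "0 \<le> bnorm (M::complex^2^2)"
  unfolding bnorm_def by (rule onorm_pos_le) simp

lemma bnorm_apply: "norm ((M::complex^2^2) *v v) \<le> bnorm M * norm v"
  unfolding bnorm_def by (rule onorm) simp

lemma ew_nonneg: "0 \<le> C \<Longrightarrow> 0 \<le> ew C d g1 g2 k a b"
  by (simp add: ew_def)

theorem proposition2p3:
  fixes g2 \<kappa> :: real
  assumes "0 \<le> g2" and "0 \<le> \<kappa>"
  shows "\<exists>C0\<ge>1. \<forall>C\<ge>C0. \<forall>(d::nat) (L::lpt set) (g1::real) (tg1::real) (tg2::real)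
           (A::bmat) (\<zeta>::lpt \<Rightarrow> complex^2).
     d \<ge> 1 \<longrightarrow> L \<subseteq> lat d \<longrightarrow> 0 \<le> g1 \<longrightarrow>
     -g1 \<le> tg1 \<longrightarrow> tg1 \<le> g1 \<longrightarrow> -g2 \<le> tg2 \<longrightarrow> tg2 \<le> g2 \<longrightarrow>
     inM C d L g1 g2 \<kappa> A \<longrightarrow> inY d L tg1 tg2 \<zeta> \<longrightarrow>
       (\<forall>a\<in>L. (\<lambda>b. A a b *v \<zeta> b) summable_on L) \<and>
       inY d L tg1 tg2 (mapply L A \<zeta>) \<and>
       Ynorm d L tg1 tg2 (mapply L A \<zeta>) \<le> Mnorm C d L g1 g2 \<kappa> A * Ynorm d L tg1 tg2 \<zeta>"
proof (rule exI[of _ "2 powr g2"], rule conjI, goal_cases)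
  case 1
  show ?case using assms(1) by (simp add: ge_one_powr_ge_zero)
next
  case 2
  show ?case
  proof (intro allI impI)
  fix C d L g1 tg1 tg2 A and \<zeta> :: "lpt \<Rightarrow> complex^2"
  assume C: "2 powr g2 \<le> C" and "1 \<le> d" "L \<subseteq> lat d" "0 \<le> g1"
    and t: "-g1 \<le> tg1" "tg1 \<le> g1" "-g2 \<le> tg2" "tg2 \<le> g2"
    and AM: "inM C d L g1 g2 \<kappa> A" and Z: "inY d L tg1 tg2 \<zeta>"
  have C1: "1 \<le> C" using C assms(1) ge_one_powr_ge_zero[of 2 g2] by linarith
  define K where "K = (\<lambda>a b. bnorm (A a b) * ew C d g1 g2 \<kappa> a b)"
  define x where "x b = norm (\<zeta> b) * wt d tg1 tg2 b" for b
  define w where "w = wt d tg1 tg2"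
  define M where "M = Mnorm C d L g1 g2 \<kappa> A"
  define s where "s a = infsum (\<lambda>b. K a b * x b) L" for a
  have Kn: "0 \<le> K a b" for a b
    unfolding K_def by (intro mult_nonneg_nonneg bnorm_nonneg ew_nonneg) (use C1 in linarith)
  have xn: "0 \<le> x b" for b unfolding x_def using wt_pos[of d tg1 tg2 b] by simp
  have wp: "0 < w a" for a unfolding w_def by (rule wt_pos)
  have xs: "(\<lambda>b. (x b)^2) summable_on L"
    using Z unfolding inY_def x_def by (simp add: power_mult_distrib)
  have rs1: "K a summable_on L" if "a \<in> L" for a
    using AM that unfolding inM_def K_def by auto
  have cs1: "(\<lambda>a. K a b) summable_on L" if "b \<in> L" for b
    using AM that unfolding inM_def K_def by auto
  have rs2: "infsum (K a) L \<le> M" if a: "a \<in> L" for a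
  proof -
    have "infsum (K a) L = rowsum C d L g1 g2 \<kappa> A a" by (simp add: rowsum_def K_def)
    also have "\<dots> \<le> (SUP a\<in>L. rowsum C d L g1 g2 \<kappa> A a)"
      using AM a unfolding inM_def by (intro cSUP_upper) simp_all
    finally show ?thesis unfolding M_def Mnorm_def by linarith
  qed
  have cs2: "infsum (\<lambda>a. K a b) L \<le> M" if b: "b \<in> L" for b
  proof -
    have "infsum (\<lambda>a. K a b) L = colsum C d L g1 g2 \<kappa> A b" by (simp add: colsum_def K_def)
    also have "\<dots> \<le> (SUP b\<in>L. colsum C d L g1 g2 \<kappa> A b)"
      using AM b unfolding inM_def by (intro cSUP_upper) simp_all
    finally show ?thesis unfolding M_def Mnorm_def by linarith
  qed
  show "(\<forall>a\<in>L. (\<lambda>b. A a b *v \<zeta> b) summable_on L) \<and>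
       inY d L tg1 tg2 (mapply L A \<zeta>) \<and>
       Ynorm d L tg1 tg2 (mapply L A \<zeta>) \<le> Mnorm C d L g1 g2 \<kappa> A * Ynorm d L tg1 tg2 \<zeta>"
  proof (cases "L = {}")
    case True
    thus ?thesis by (simp add: inY_def Ynorm_def)
  next
    case False
    then obtain a0 where a0: "a0 \<in> L" by auto
    have M0: "0 \<le> M" using rs2[OF a0] infsum_nonneg[of L "K a0"] Kn by force
    note S = schur[of L K M x, OF Kn rs1 rs2 cs1 cs2 xn xs M0]
    have keyb: "norm (A a b *v \<zeta> b) \<le> K a b * x b * inverse (w a)" for a b
    proof -
      have "norm (A a b *v \<zeta> b) * w a \<le> bnorm (A a b) * norm (\<zeta> b) * w a"
        using bnorm_apply wp[of a] by (simp add: mult_right_mono)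
      also have "\<dots> \<le> bnorm (A a b) * norm (\<zeta> b) * (ew C d g1 g2 \<kappa> a b * w b)"
        unfolding w_def using wt_le[OF t assms C] bnorm_nonneg
        by (intro mult_left_mono) (auto intro: mult_nonneg_nonneg)
      also have "\<dots> = K a b * x b" by (simp add: K_def x_def w_def)
      finally show ?thesis using wp[of a] by (simp add: field_simps)
    qed
    have ks: "(\<lambda>b. K a b * x b * inverse (w a)) summable_on L" if a: "a \<in> L" for a
      using summable_on_cmult_left[of "\<lambda>b. K a b * x b" L "inverse (w a)"] S(1) a by blast
    have ns: "(\<lambda>b. norm (A a b *v \<zeta> b)) summable_on L" if a: "a \<in> L" for a
    proof (rule summable_on_comparison_test[OF ks[OF a]])
      fix b show "norm (A a b *v \<zeta> b) \<le> K a b * x b * inverse (w a)" by (rule keyb)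
      show "0 \<le> norm (A a b *v \<zeta> b)" by simp
    qed
    have sm: "(\<lambda>b. A a b *v \<zeta> b) summable_on L" if a: "a \<in> L" for a
      by (rule abs_summable_summable) (use ns[OF a] in simp)
    have my: "norm (mapply L A \<zeta> a) * w a \<le> s a" if a: "a \<in> L" for a
    proof -
      have "norm (mapply L A \<zeta> a) \<le> infsum (\<lambda>b. norm (A a b *v \<zeta> b)) L"
        unfolding mapply_def by (rule norm_infsum_bound) (use ns[OF a] in simp)
      also have "\<dots> \<le> infsum (\<lambda>b. K a b * x b * inverse (w a)) L"
        by (rule infsum_mono[OF ns[OF a] ks[OF a] keyb])
      also have "\<dots> = s a * inverse (w a)"
        unfolding s_def by (rule infsum_cmult_left) (use S(1) a in auto)
      finally show ?thesis using wp[of a] by (simp add: field_simps)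
    qed
    have my2: "(norm (mapply L A \<zeta> a))^2 * (wt d tg1 tg2 a)^2 \<le> (s a)^2" if a: "a \<in> L" for a
    proof -
      have "(norm (mapply L A \<zeta> a) * w a)^2 \<le> (s a)^2"
        using my[OF a] wp[of a] by (intro power_mono) auto
      thus ?thesis by (simp add: w_def power_mult_distrib)
    qed
    have yS: "(\<lambda>a. (norm (mapply L A \<zeta> a))^2 * (wt d tg1 tg2 a)^2) summable_on L"
    proof (rule summable_on_comparison_test[OF S(2)])
      fix a assume "a \<in> L"
      thus "(norm (mapply L A \<zeta> a))^2 * (wt d tg1 tg2 a)^2 \<le> (\<Sum>\<^sub>\<infinity>b\<in>L. K a b * x b)^2"
        using my2 by (simp add: s_def)
      show "0 \<le> (norm (mapply L A \<zeta> a))^2 * (wt d tg1 tg2 a)^2" by simp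
    qed
    have "Ynorm d L tg1 tg2 (mapply L A \<zeta>) \<le> sqrt (infsum (\<lambda>a. (s a)^2) L)"
      unfolding Ynorm_def
    proof (rule real_sqrt_le_mono, rule infsum_mono[OF yS])
      show "(\<lambda>a. (s a)^2) summable_on L" using S(2) by (simp add: s_def)
      fix a assume "a \<in> L" thus "(norm (mapply L A \<zeta> a))^2 * (wt d tg1 tg2 a)^2 \<le> (s a)^2" by (rule my2)
    qed
    also have "\<dots> \<le> sqrt (M^2 * infsum (\<lambda>b. (x b)^2) L)"
      using S(3) by (simp add: s_def)
    also have "\<dots> = M * Ynorm d L tg1 tg2 \<zeta>"
      using M0 by (simp add: Ynorm_def real_sqrt_mult x_def power_mult_distrib)
    finally show ?thesis using sm yS by (simp add: inY_def M_def)
  qed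
  qed
  qed

end
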